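(* Let $\nu>0$, $\tau>0$, $A>0$, $N\ge2$, and let $h^n$ ($n\ge0$) be generated by the MBE scheme $h^0=\Pi_Nh_0$, $\frac{h^{n+1}-h^n}{\tau}=-\nu\Delta^2h^{n+1}+A\Delta(h^{n+1}-h^n)+\Pi_N\nabla\cdot(g(\nabla h^n))$ with $h_0$ of mean zero. Then for every $n\ge0$, with $E_n=E(h^n)$, $$E_{n+1}-E_n+\Big(A+\frac12+\sqrt{\frac{2\nu}\tau}\Big)\|\nabla(h^{n+1}-h^n)\|_2^2\le\|\nabla(h^{n+1}-h^n)\|_2^2\cdot\frac32\max\{\|\nabla h^n\|_\infty^2,\|\nabla h^{n+1}\|_\infty^2\}.$$
   Context: $\mathbb T^2=\mathbb R^2/2\pi\mathbb Z^2$; $g(z)=(|z|^2-1)z$, $G(z)=\frac14(|z|^2-1)^2$; $E(h)=\frac\nu2\|\Delta h\|_2^2+\int_{\mathbb T^2}G(\nabla h)dx$; $\Pi_N$ is the $L^2$-orthogonal projection onto $X_N=\operatorname{span}\{\cos(k\cdot x),\sin(k\cdot x):|k|\le N\}$. *)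

theory Defs
  imports "HOL-Analysis.Analysis"
begin

text \<open>Functions on the torus T^2 = R^2 / 2 pi Z^2 are represented as 2 pi-periodic
  functions on real^2; integrals over T^2 are integrals over the fundamental box.\<close>

definition torus_box :: "(real^2) set" where
  "torus_box = cbox 0 (\<chi> i. 2 * pi)"

definition periodic2 :: "(real^2 \<Rightarrow> 'a) \<Rightarrow> bool" where
  "periodic2 f \<longleftrightarrow> (\<forall>x i. f (x + (2 * pi) *\<^sub>R axis i 1) = f x)"

definition tint :: "(real^2 \<Rightarrow> real) \<Rightarrow> real" where
  "tint f = integral torus_box f"

definition pd :: "2 \<Rightarrow> (real^2 \<Rightarrow> real) \<Rightarrow> real^2 \<Rightarrow> real" where
  "pd i f x = deriv (\<lambda>t. f (x + t *\<^sub>R axis i 1)) 0"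

definition grad :: "(real^2 \<Rightarrow> real) \<Rightarrow> real^2 \<Rightarrow> real^2" where
  "grad f x = (\<chi> i. pd i f x)"

definition dvg :: "(real^2 \<Rightarrow> real^2) \<Rightarrow> real^2 \<Rightarrow> real" where
  "dvg F x = (\<Sum>i\<in>UNIV. pd i (\<lambda>y. F y $ i) x)"

definition lap :: "(real^2 \<Rightarrow> real) \<Rightarrow> real^2 \<Rightarrow> real" where
  "lap f = dvg (grad f)"

definition gnl :: "real^2 \<Rightarrow> real^2" where
  "gnl z = ((norm z)^2 - 1) *\<^sub>R z"

definition Gpot :: "real^2 \<Rightarrow> real" where
  "Gpot z = ((norm z)^2 - 1)^2 / 4"

definition energy :: "real \<Rightarrow> (real^2 \<Rightarrow> real) \<Rightarrow> real" where
  "energy \<nu> h = \<nu> / 2 * tint (\<lambda>x. (lap h x)^2) + tint (\<lambda>x. Gpot (grad h x))"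

definition grad_L2sq :: "(real^2 \<Rightarrow> real) \<Rightarrow> real" where
  "grad_L2sq f = tint (\<lambda>x. (norm (grad f x))^2)"

definition grad_Linf :: "(real^2 \<Rightarrow> real) \<Rightarrow> real" where
  "grad_Linf f = (SUP x\<in>UNIV. norm (grad f x))"

definition lattice_pts :: "nat \<Rightarrow> (real^2) set" where
  "lattice_pts N = {k. (\<forall>i. k $ i \<in> \<int>) \<and> norm k \<le> real N}"

definition XN :: "nat \<Rightarrow> (real^2 \<Rightarrow> real) set" where
  "XN N = {f. \<exists>a b :: real^2 \<Rightarrow> real.
      f = (\<lambda>x. \<Sum>k\<in>lattice_pts N. a k * cos (k \<bullet> x) + b k * sin (k \<bullet> x))}"

definition PiN :: "nat \<Rightarrow> (real^2 \<Rightarrow> real) \<Rightarrow> (real^2 \<Rightarrow> real)" where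
  "PiN N f = (THE p. p \<in> XN N \<and> (\<forall>q\<in>XN N. tint (\<lambda>x. (f x - p x) * q x) = 0))"

end

theory Submission
  imports Defs
begin



inductive_set T :: "(real^2 \<Rightarrow> real) set" where
  cst: "(\<lambda>x. c) \<in> T"
| cs: "(\<forall>i. k $ i \<in> \<int>) \<Longrightarrow> (\<lambda>x. cos (k \<bullet> x)) \<in> T"
| sn: "(\<forall>i. k $ i \<in> \<int>) \<Longrightarrow> (\<lambda>x. sin (k \<bullet> x)) \<in> T"
| add: "f \<in> T \<Longrightarrow> g \<in> T \<Longrightarrow> (\<lambda>x. f x + g x) \<in> T"
| mul: "f \<in> T \<Longrightarrow> g \<in> T \<Longrightarrow> (\<lambda>x. f x * g x) \<in> T"

lemma T_cmul: "f \<in> T \<Longrightarrow> (\<lambda>x. c * f x) \<in> T"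
  using T.mul[OF T.cst] by blast

lemma T_diff: "f \<in> T \<Longrightarrow> g \<in> T \<Longrightarrow> (\<lambda>x. f x - g x) \<in> T"
  using T.add[OF _ T_cmul[of g "-1"]] by simp

lemma T_pow: "f \<in> T \<Longrightarrow> (\<lambda>x. f x ^ n) \<in> T"
  by (induction n) (auto intro: T.intros)

lemma T_sum: assumes "\<And>k. k \<in> S \<Longrightarrow> (\<lambda>x. F k x) \<in> T" shows "(\<lambda>x. \<Sum>k\<in>S. F k x) \<in> T"
proof (cases "finite S")
  case True
  then show ?thesis using assms
    by (induction S rule: finite_induct) (auto intro: T.intros)
next
  case False then show ?thesis using T.cst[of 0] by simp
qed

lemma T_cont: "f \<in> T \<Longrightarrow> continuous_on UNIV f"
  by (induction rule: T.induct) (auto intro!: continuous_intros)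

lemma T_bdd: "f \<in> T \<Longrightarrow> \<exists>B. \<forall>x. \<bar>f x\<bar> \<le> B"
proof (induction rule: T.induct)
  case (add f g)
  then obtain B C where "\<forall>x. \<bar>f x\<bar> \<le> B" "\<forall>x. \<bar>g x\<bar> \<le> C" by blast
  then show ?case by (intro exI[of _ "B+C"] allI) (metis abs_triangle_ineq add_mono order_trans)
next
  case (mul f g)
  then obtain B C where "\<forall>x. \<bar>f x\<bar> \<le> B" "\<forall>x. \<bar>g x\<bar> \<le> C" by blast
  then show ?case by (intro exI[of _ "B*C"]) (simp add: abs_mult mult_mono')
next
  case (cs k) show ?case by (rule exI[of _ 1]) (simp add: abs_cos_le_one)
next
  case (sn k) show ?case by (rule exI[of _ 1]) (simp add: abs_sin_le_one)
qed auto

lemma int_shift_axis: fixes k x :: "real^2" shows "k $ i \<in> \<int> \<Longrightarrow> \<exists>m::int. k \<bullet> (x + (2*pi) *\<^sub>R axis i 1) = k \<bullet> x + 2*pi * of_int m"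
  proof -
  assume "k $ i \<in> \<int>" then obtain z where "k $ i = of_int z" by (auto elim!: Ints_cases)
  then show ?thesis by (intro exI[of _ z]) (simp add: inner_add_right inner_axis real_inner_1_right)
qed

lemma T_per: "f \<in> T \<Longrightarrow> f (x + (2*pi) *\<^sub>R axis i 1) = f x"
proof (induction arbitrary: x rule: T.induct)
  case (cs k)
  then obtain m::int where "k \<bullet> (x + (2*pi) *\<^sub>R axis i 1) = k \<bullet> x + 2*pi * of_int m"
    using int_shift_axis by blast
  then show ?case by (simp add: cos_add)
next
  case (sn k)
  then obtain m::int where "k \<bullet> (x + (2*pi) *\<^sub>R axis i 1) = k \<bullet> x + 2*pi * of_int m"
    using int_shift_axis by blast
  then show ?case by (simp add: sin_add)
qed auto

definition Dd :: "2 \<Rightarrow> (real^2 \<Rightarrow> real) \<Rightarrow> (real^2 \<Rightarrow> real) \<Rightarrow> bool" where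
  "Dd i f g \<longleftrightarrow> (\<forall>x. ((\<lambda>t. f (x + t *\<^sub>R axis i 1)) has_real_derivative g x) (at 0))"

lemma T_D: "f \<in> T \<Longrightarrow> \<exists>g\<in>T. Dd i f g"
proof (induction rule: T.induct)
  case (cst c)
  then show ?case by (auto simp: Dd_def intro!: bexI[of _ "\<lambda>x. 0"] T.intros)
next
  case (cs k)
  have "Dd i (\<lambda>x. cos (k \<bullet> x)) (\<lambda>x. - (k $ i) * sin (k \<bullet> x))"
    unfolding Dd_def inner_add_right inner_scaleR_right inner_axis
    by (auto intro!: derivative_eq_intros)
  moreover have "(\<lambda>x. - (k $ i) * sin (k \<bullet> x)) \<in> T" using T_cmul[OF T.sn[OF cs]] .
  ultimately show ?case by (rule bexI)
next
  case (sn k)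
  have "Dd i (\<lambda>x. sin (k \<bullet> x)) (\<lambda>x. (k $ i) * cos (k \<bullet> x))"
    unfolding Dd_def inner_add_right inner_scaleR_right inner_axis
    by (auto intro!: derivative_eq_intros)
  moreover have "(\<lambda>x. (k $ i) * cos (k \<bullet> x)) \<in> T" using T_cmul[OF T.cs[OF sn]] .
  ultimately show ?case by (rule bexI)
next
  case (add f g)
  then obtain f' g' where "f'\<in>T" "g'\<in>T" "Dd i f f'" "Dd i g g'" by blast
  then show ?case unfolding Dd_def
    by (auto intro!: bexI[of _ "\<lambda>x. f' x + g' x"] T.add derivative_eq_intros)
next
  case (mul f g)
  then obtain f' g' where "f'\<in>T" "g'\<in>T" "Dd i f f'" "Dd i g g'" by blast
  then show ?case unfolding Dd_def
    by (auto intro!: bexI[of _ "\<lambda>x. f' x * g x + f x * g' x"] T.add T.mul mul derivative_eq_intros)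
qed

lemma Dd_pd: "Dd i f g \<Longrightarrow> pd i f = g"
  unfolding Dd_def pd_def by (auto intro!: ext DERIV_imp_deriv)

lemma T_pd: "f \<in> T \<Longrightarrow> pd i f \<in> T \<and> Dd i f (pd i f)"
  using T_D[of f i] Dd_pd by blast

lemma pd_add: "f \<in> T \<Longrightarrow> g \<in> T \<Longrightarrow> pd i (\<lambda>x. f x + g x) = (\<lambda>x. pd i f x + pd i g x)"
  using T_pd[of f i] T_pd[of g i] unfolding Dd_def
  by (intro Dd_pd) (auto simp: Dd_def intro!: derivative_eq_intros)

lemma pd_mul: "f \<in> T \<Longrightarrow> g \<in> T \<Longrightarrow> pd i (\<lambda>x. f x * g x) = (\<lambda>x. pd i f x * g x + f x * pd i g x)"
  using T_pd[of f i] T_pd[of g i] unfolding Dd_def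
  by (intro Dd_pd) (auto simp: Dd_def intro!: derivative_eq_intros)

lemma pd_diff: "f \<in> T \<Longrightarrow> g \<in> T \<Longrightarrow> pd i (\<lambda>x. f x - g x) = (\<lambda>x. pd i f x - pd i g x)"
  using T_pd[of f i] T_pd[of g i] unfolding Dd_def
  by (intro Dd_pd) (auto simp: Dd_def intro!: derivative_eq_intros)




definition gg :: "real \<times> real \<Rightarrow> real^2" where
  "gg p = fst p *\<^sub>R axis 1 1 + snd p *\<^sub>R axis 2 1"
definition hh :: "real^2 \<Rightarrow> real \<times> real" where
  "hh v = (v$1, v$2)"

lemma gg_comp[simp]: "gg p $ 1 = fst p" "gg p $ 2 = snd p"
  by (auto simp: gg_def axis_def)

lemma hh_gg[simp]: "hh (gg p) = p" by (simp add: hh_def)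
lemma gg_hh[simp]: "gg (hh v) = v" by (simp add: vec_eq_iff forall_2 hh_def)

lemma mem_cbox2: "(x::real^2) \<in> cbox a b \<longleftrightarrow> a$1 \<le> x$1 \<and> x$1 \<le> b$1 \<and> a$2 \<le> x$2 \<and> x$2 \<le> b$2"
  by (auto simp: mem_box_cart forall_2)

lemma mem_cboxP: "(x::real\<times>real) \<in> cbox a b \<longleftrightarrow> fst a \<le> fst x \<and> fst x \<le> fst b \<and> snd a \<le> snd x \<and> snd x \<le> snd b"
  by (cases a; cases b; cases x) (auto simp: cbox_Pair_eq)

lemma gg_img: "gg ` cbox u v = cbox (gg u) (gg v)"
proof -
  have "y \<in> gg ` cbox u v \<longleftrightarrow> hh y \<in> cbox u v" for y
    by (metis gg_hh hh_gg image_iff)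
  then show ?thesis by (auto simp: mem_cbox2 mem_cboxP hh_def)
qed

lemma hh_img: "hh ` cbox u v = cbox (hh u) (hh v)"
proof -
  have "y \<in> hh ` cbox u v \<longleftrightarrow> gg y \<in> cbox u v" for y
    by (metis gg_hh hh_gg image_iff)
  then show ?thesis by (auto simp: mem_cbox2 mem_cboxP hh_def)
qed

lemma gg_content: "measure lborel (gg ` cbox u v) = 1 * measure lborel (cbox u v)"
proof (cases "cbox u v = {}")
  case True then show ?thesis by simp
next
  case False
  then have ne: "cbox (gg u) (gg v) \<noteq> {}" by (metis gg_img image_is_empty)
  obtain u1 u2 v1 v2 where uv: "u = (u1,u2)" "v = (v1,v2)" by (cases u; cases v)
  have le: "u1 \<le> v1" "u2 \<le> v2" using False uv by (auto simp: cbox_Pair_eq)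
  show ?thesis using ne le unfolding gg_img
    by (simp add: content_cbox_cart sum_2 UNIV_2 uv content_Pair content_real)
qed

lemma gg_cont: "continuous (at x) gg"
  unfolding gg_def by (intro continuous_intros)

lemma tint_fubini:
  assumes "continuous_on UNIV F"
  shows "tint F = integral {0..2*pi} (\<lambda>x. integral {0..2*pi} (\<lambda>y. F (gg (x,y))))"
proof -
  have int: "(F has_integral tint F) torus_box"
    unfolding tint_def torus_box_def
    by (intro integrable_integral integrable_continuous continuous_on_subset[OF assms]) auto
  have "((\<lambda>x. F (gg x)) has_integral (1/1) *\<^sub>R tint F) (hh ` torus_box)"
    unfolding torus_box_def
  proof (rule has_integral_twiddle[where g=gg and h=hh and r=1])
    show "\<exists>w z. gg ` cbox u v = cbox w z" for u v using gg_img by blast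
    show "\<exists>w z. hh ` cbox u v = cbox w z" for u v using hh_img by blast
    show "measure lborel (gg ` cbox u v) = 1 * measure lborel (cbox u v)" for u v by (rule gg_content)
    show "(F has_integral tint F) (cbox 0 (\<chi> i. 2*pi))" using int unfolding torus_box_def .
  qed (auto simp: gg_cont)
  moreover have "hh ` torus_box = cbox (0,0) (2*pi,2*pi)"
    unfolding torus_box_def hh_img by (simp add: hh_def)
  ultimately have "tint F = integral (cbox (0,0) (2*pi,2*pi)) (\<lambda>x. F (gg x))"
    by (simp add: integral_unique)
  also have "\<dots> = integral (cbox 0 (2*pi)) (\<lambda>x. integral (cbox 0 (2*pi)) (\<lambda>y. F (gg (x,y))))"
    by (intro integral_prod_continuous continuous_on_compose2[OF assms])
       (auto simp: gg_def intro!: continuous_intros)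
  finally show ?thesis by simp
qed




lemma line_int:
  assumes "w \<in> T"
  shows "integral {0..2*pi} (\<lambda>t. pd i w (p + t *\<^sub>R axis i 1)) = 0"
proof -
  have D: "Dd i w (pd i w)" using T_pd[OF assms] by blast
  have der: "((\<lambda>s. w (p + s *\<^sub>R axis i 1)) has_real_derivative pd i w (p + t *\<^sub>R axis i 1)) (at t)" for t
  proof -
    have "((\<lambda>s. w ((p + t *\<^sub>R axis i 1) + s *\<^sub>R axis i 1)) has_real_derivative pd i w (p + t *\<^sub>R axis i 1)) (at 0)"
      using D unfolding Dd_def by blast
    moreover have "(\<lambda>s. w ((p + t *\<^sub>R axis i 1) + s *\<^sub>R axis i 1)) = (\<lambda>s. (\<lambda>s. w (p + s *\<^sub>R axis i 1)) (s + t))"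
      by (auto simp: algebra_simps)
    ultimately show ?thesis using DERIV_shift[of "\<lambda>s. w (p + s *\<^sub>R axis i 1)" _ 0 t] by simp
  qed
  have "((\<lambda>t. pd i w (p + t *\<^sub>R axis i 1)) has_integral
          (w (p + (2*pi) *\<^sub>R axis i 1) - w (p + 0 *\<^sub>R axis i 1))) {0..2*pi}"
    by (intro fundamental_theorem_of_calculus)
       (auto simp: has_real_derivative_iff_has_vector_derivative[symmetric] intro!: has_field_derivative_at_within der)
  moreover have "w (p + (2*pi) *\<^sub>R axis i 1) = w p" using T_per[OF assms] .
  ultimately show ?thesis by (simp add: integral_unique)
qed

lemma tint_pd0:
  assumes "w \<in> T"
  shows "tint (pd i w) = 0"
proof -
  have pT: "pd i w \<in> T" using T_pd[OF assms] by blast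
  have c: "continuous_on UNIV (pd i w)" using T_cont[OF pT] .
  have cc0: "continuous_on S (\<lambda>q. pd i w (gg q))" for S
    by (rule continuous_on_compose2[OF c, of S gg]) (auto simp: gg_def intro!: continuous_intros)
  have cc: "continuous_on S (\<lambda>(x,y). pd i w (gg (x,y)))" for S
    using cc0[of S] by (simp add: case_prod_beta')
  consider "i = 1" | "i = 2" using exhaust_2 by blast
  then show ?thesis
  proof cases
    case 2
    have "tint (pd i w) = integral {0..2*pi} (\<lambda>x. integral {0..2*pi} (\<lambda>y. pd i w (x *\<^sub>R axis 1 1 + y *\<^sub>R axis i 1)))"
      using tint_fubini[OF c] 2 by (simp add: gg_def)
    also have "\<dots> = 0" by (simp add: line_int[OF assms])
    finally show ?thesis .
  next
    case 1
    have "tint (pd i w) = integral (cbox 0 (2*pi)) (\<lambda>x. integral (cbox 0 (2*pi)) (\<lambda>y. pd i w (gg (x,y))))"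
      using tint_fubini[OF c] by simp
    also have "\<dots> = integral (cbox 0 (2*pi)) (\<lambda>y. integral (cbox 0 (2*pi)) (\<lambda>x. pd i w (gg (x,y))))"
      by (rule integral_swap_continuous) (use cc in auto)
    also have "\<dots> = integral {0..2*pi} (\<lambda>y. integral {0..2*pi} (\<lambda>x. pd i w (y *\<^sub>R axis 2 1 + x *\<^sub>R axis i 1)))"
      using 1 by (simp add: gg_def add.commute)
    also have "\<dots> = 0" by (simp add: line_int[OF assms])
    finally show ?thesis .
  qed
qed




lemma cont_int: fixes f :: "real^2 \<Rightarrow> real" shows "continuous_on UNIV f \<Longrightarrow> f integrable_on torus_box"
  unfolding torus_box_def by (rule integrable_continuous, rule continuous_on_subset[of UNIV]) auto

lemma tint_add: "continuous_on UNIV f \<Longrightarrow> continuous_on UNIV g \<Longrightarrow> tint (\<lambda>x. f x + g x) = tint f + tint g"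
  unfolding tint_def by (intro integral_add cont_int)

lemma tint_diff: "continuous_on UNIV f \<Longrightarrow> continuous_on UNIV g \<Longrightarrow> tint (\<lambda>x. f x - g x) = tint f - tint g"
  unfolding tint_def by (intro integral_diff cont_int)

lemma tint_cmul: "tint (\<lambda>x. c * f x) = c * tint f"
  unfolding tint_def by simp

lemma tint_mono: "continuous_on UNIV f \<Longrightarrow> continuous_on UNIV g \<Longrightarrow> (\<And>x. f x \<le> g x) \<Longrightarrow> tint f \<le> tint g"
  unfolding tint_def by (rule integral_le) (auto intro: cont_int)

lemma tint_cong: "(\<And>x. f x = g x) \<Longrightarrow> tint f = tint g"
  by (rule arg_cong[where f=tint]) (rule ext)

lemma ibp:
  assumes "u \<in> T" "v \<in> T"
  shows "tint (\<lambda>x. pd i u x * v x) = - tint (\<lambda>x. u x * pd i v x)"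
proof -
  have uv: "(\<lambda>x. u x * v x) \<in> T" using assms by (rule T.mul)
  have "0 = tint (pd i (\<lambda>x. u x * v x))" using tint_pd0[OF uv] by simp
  also have "\<dots> = tint (\<lambda>x. pd i u x * v x + u x * pd i v x)" using pd_mul[OF assms] by simp
  also have "\<dots> = tint (\<lambda>x. pd i u x * v x) + tint (\<lambda>x. u x * pd i v x)"
    using assms T_pd[OF assms(1), of i] T_pd[OF assms(2), of i]
    by (intro tint_add T_cont T.mul) auto
  finally show ?thesis by simp
qed

lemma lap_eq: "lap f = (\<lambda>x. pd 1 (pd 1 f) x + pd 2 (pd 2 f) x)"
  unfolding lap_def dvg_def grad_def by (simp add: sum_2)

lemma lap_T: "f \<in> T \<Longrightarrow> lap f \<in> T"
proof -
  assume "f \<in> T"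
  then have "pd 1 f \<in> T" "pd 2 f \<in> T" using T_pd by blast+
  then have "pd 1 (pd 1 f) \<in> T" "pd 2 (pd 2 f) \<in> T" using T_pd by blast+
  then show ?thesis unfolding lap_eq by (intro T.add)
qed

lemma green:
  assumes "u \<in> T" "v \<in> T"
  shows "tint (\<lambda>x. lap u x * v x) = - tint (\<lambda>x. pd 1 u x * pd 1 v x + pd 2 u x * pd 2 v x)"
proof -
  have T1: "pd 1 u \<in> T" "pd 2 u \<in> T" "pd 1 v \<in> T" "pd 2 v \<in> T" using T_pd assms by blast+
  have T2: "pd 1 (pd 1 u) \<in> T" "pd 2 (pd 2 u) \<in> T" using T_pd T1 by blast+
  have "tint (\<lambda>x. lap u x * v x) = tint (\<lambda>x. pd 1 (pd 1 u) x * v x + pd 2 (pd 2 u) x * v x)"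
    unfolding lap_eq by (simp add: distrib_right)
  also have "\<dots> = tint (\<lambda>x. pd 1 (pd 1 u) x * v x) + tint (\<lambda>x. pd 2 (pd 2 u) x * v x)"
    using T1 T2 assms by (intro tint_add T_cont T.mul)
  also have "\<dots> = - tint (\<lambda>x. pd 1 u x * pd 1 v x) - tint (\<lambda>x. pd 2 u x * pd 2 v x)"
    using ibp[OF T1(1) assms(2)] ibp[OF T1(2) assms(2)] by simp
  also have "\<dots> = - tint (\<lambda>x. pd 1 u x * pd 1 v x + pd 2 u x * pd 2 v x)"
    using T1 by (subst tint_add) (auto intro!: T_cont T.mul)
  finally show ?thesis .
qed

lemma lap_sym:
  assumes "u \<in> T" "v \<in> T"
  shows "tint (\<lambda>x. lap u x * v x) = tint (\<lambda>x. u x * lap v x)"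
  using green[OF assms] green[OF assms(2,1)] by (simp add: mult.commute)




lemma T_per_nat: "f \<in> T \<Longrightarrow> f (x + (2*pi*real n) *\<^sub>R axis i 1) = f x"
proof (induction n)
  case (Suc n)
  have "x + (2*pi*real (Suc n)) *\<^sub>R axis i 1 = (x + (2*pi*real n) *\<^sub>R axis i 1) + (2*pi) *\<^sub>R axis i 1"
    by (simp add: algebra_simps)
  then show ?case using Suc T_per[OF Suc.prems, of "x + (2*pi*real n) *\<^sub>R axis i 1" i] by (simp add: add.assoc)
qed simp

lemma T_per_int: assumes "f \<in> T" shows "f (x + (2*pi * of_int m) *\<^sub>R axis i 1) = f x"
proof (cases "m \<ge> 0")
  case True
  then obtain n where "m = int n" by (metis nonneg_eq_int)
  then show ?thesis using T_per_nat[OF assms] by simp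
next
  case False
  then obtain n where n: "m = - int n" by (metis neg_int_cases not_le less_imp_le)
  have "f ((x + (2*pi * of_int m) *\<^sub>R axis i 1) + (2*pi*real n) *\<^sub>R axis i 1) = f (x + (2*pi * of_int m) *\<^sub>R axis i 1)"
    using T_per_nat[OF assms] .
  moreover have "(x + (2*pi * of_int m) *\<^sub>R axis i 1) + (2*pi*real n) *\<^sub>R axis i 1 = x"
    using n by (simp add: algebra_simps)
  ultimately show ?thesis by simp
qed

lemma reduce_box: assumes "f \<in> T" shows "\<exists>y \<in> cbox 0 (\<chi> i. 2*pi). f x = f y"
proof -
  define m1 where "m1 = \<lfloor>x$1 / (2*pi)\<rfloor>"
  define m2 where "m2 = \<lfloor>x$2 / (2*pi)\<rfloor>"
  define y where "y = (x + (2*pi * of_int (-m1)) *\<^sub>R axis 1 1) + (2*pi * of_int (-m2)) *\<^sub>R axis 2 1"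
  have "f y = f x" unfolding y_def
    using T_per_int[OF assms, of "x + (2*pi * of_int (-m1)) *\<^sub>R axis 1 1" "-m2" 2]
          T_per_int[OF assms, of x "-m1" 1] by simp
  moreover have "y$1 = x$1 - 2*pi*m1" "y$2 = x$2 - 2*pi*m2"
    unfolding y_def by (auto simp: axis_def)
  moreover have "0 \<le> x$j - 2*pi*\<lfloor>x$j / (2*pi)\<rfloor>" "x$j - 2*pi*\<lfloor>x$j / (2*pi)\<rfloor> \<le> 2*pi" for j
  proof -
    have a: "of_int \<lfloor>x$j / (2*pi)\<rfloor> \<le> x$j / (2*pi)" "x$j / (2*pi) < of_int \<lfloor>x$j / (2*pi)\<rfloor> + 1"
      by linarith+
    have p: "2*pi > 0" by simp
    from mult_left_mono[OF a(1) less_imp_le[OF p]] show "0 \<le> x$j - 2*pi*\<lfloor>x$j / (2*pi)\<rfloor>" by simp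
    from mult_strict_left_mono[OF a(2) p] show "x$j - 2*pi*\<lfloor>x$j / (2*pi)\<rfloor> \<le> 2*pi" by (simp add: algebra_simps)
  qed
  ultimately show ?thesis
    by (intro bexI[of _ y]) (auto simp: mem_box_cart forall_2 m1_def m2_def)
qed

lemma pos_zero:
  assumes "u \<in> T" "tint (\<lambda>x. u x * u x) = 0"
  shows "u x = 0"
proof -
  have uu: "(\<lambda>x. u x * u x) \<in> T" using assms by (intro T.mul)
  have c: "continuous_on UNIV (\<lambda>x. u x * u x)" using T_cont[OF uu] .
  have hi: "((\<lambda>x. u x * u x) has_integral 0) (cbox 0 (\<chi> i. 2*pi))"
    using cont_int[OF c] assms(2) unfolding tint_def torus_box_def
    by (metis has_integral_integrable_integral)
  have ne: "box 0 (\<chi> i. 2*pi) \<noteq> ({} :: (real^2) set)"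
  proof -
    have "(\<chi> i. pi) \<in> box 0 (\<chi> i. 2*pi :: real^2)" by (simp add: mem_box_cart)
    then show ?thesis by blast
  qed
  obtain y where y: "y \<in> cbox 0 (\<chi> i. 2*pi)" "u x = u y" using reduce_box[OF assms(1)] by blast
  have "u y * u y = 0"
    by (rule has_integral_0_cbox_imp_0[OF continuous_on_subset[OF c] _ hi ne y(1)]) auto
  then show ?thesis using y by simp
qed




definition proj :: "(real^2 \<Rightarrow> real) set \<Rightarrow> (real^2 \<Rightarrow> real) \<Rightarrow> (real^2 \<Rightarrow> real) \<Rightarrow> bool" where
  "proj S f p \<longleftrightarrow> p \<in> S \<and> (\<forall>q\<in>S. tint (\<lambda>x. (f x - p x) * q x) = 0)"

lemma tint_lin4:
  assumes "F1 \<in> T" "F2 \<in> T" "F3 \<in> T" "F4 \<in> T"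
  shows "tint (\<lambda>x. F1 x + a * F2 x + b * F3 x + c * F4 x) = tint F1 + a * tint F2 + b * tint F3 + c * tint F4"
proof -
  have c: "continuous_on UNIV F1" "continuous_on UNIV F2" "continuous_on UNIV F3" "continuous_on UNIV F4"
    using assms T_cont by blast+
  have "tint (\<lambda>x. F1 x + a * F2 x + b * F3 x + c * F4 x)
      = tint (\<lambda>x. F1 x + a * F2 x + b * F3 x) + tint (\<lambda>x. c * F4 x)"
    using c by (intro tint_add) (auto intro!: continuous_intros)
  also have "tint (\<lambda>x. F1 x + a * F2 x + b * F3 x) = tint (\<lambda>x. F1 x + a * F2 x) + tint (\<lambda>x. b * F3 x)"
    using c by (intro tint_add) (auto intro!: continuous_intros)
  also have "tint (\<lambda>x. F1 x + a * F2 x) = tint F1 + tint (\<lambda>x. a * F2 x)"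
    using c by (intro tint_add) (auto intro!: continuous_intros)
  finally show ?thesis by (simp add: tint_cmul)
qed

definition ext1 :: "(real^2 \<Rightarrow> real) set \<Rightarrow> (real^2 \<Rightarrow> real) \<Rightarrow> (real^2 \<Rightarrow> real) set" where
  "ext1 S \<phi> = {(\<lambda>x. s x + c * \<phi> x) | s c. s \<in> S}"

definition good :: "(real^2 \<Rightarrow> real) set \<Rightarrow> bool" where
  "good S \<longleftrightarrow> S \<subseteq> T \<and> S \<noteq> {} \<and> (\<forall>s\<in>S. \<forall>t\<in>S. (\<lambda>x. s x + t x) \<in> S)
     \<and> (\<forall>s\<in>S. \<forall>c. (\<lambda>x. c * s x) \<in> S) \<and> (\<forall>f\<in>T. \<exists>p. proj S f p)"

lemma good_ext1:
  assumes g: "good S" and phT: "\<phi> \<in> T"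
  shows "good (ext1 S \<phi>)"
proof -
  have ST: "S \<subseteq> T" and ne: "S \<noteq> {}" and addS: "\<And>s t. s\<in>S \<Longrightarrow> t\<in>S \<Longrightarrow> (\<lambda>x. s x + t x) \<in> S"
    and smS: "\<And>s c. s\<in>S \<Longrightarrow> (\<lambda>x. c * s x) \<in> S" and P: "\<And>f. f\<in>T \<Longrightarrow> \<exists>p. proj S f p"
    using g unfolding good_def by blast+
  have "ext1 S \<phi> \<subseteq> T" using ST phT unfolding ext1_def by (auto intro!: T.add T_cmul)
  moreover have "ext1 S \<phi> \<noteq> {}" using ne unfolding ext1_def by blast
  moreover have "\<forall>s\<in>ext1 S \<phi>. \<forall>t\<in>ext1 S \<phi>. (\<lambda>x. s x + t x) \<in> ext1 S \<phi>"
  proof (intro ballI)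
    fix s t assume "s \<in> ext1 S \<phi>" "t \<in> ext1 S \<phi>"
    then obtain s0 c t0 d where "s0 \<in> S" "t0 \<in> S" "s = (\<lambda>x. s0 x + c * \<phi> x)" "t = (\<lambda>x. t0 x + d * \<phi> x)"
      unfolding ext1_def by blast
    then show "(\<lambda>x. s x + t x) \<in> ext1 S \<phi>" unfolding ext1_def
      by (auto intro!: exI[of _ "\<lambda>x. s0 x + t0 x"] exI[of _ "c+d"] addS simp: algebra_simps)
  qed
  moreover have "\<forall>s\<in>ext1 S \<phi>. \<forall>e. (\<lambda>x. e * s x) \<in> ext1 S \<phi>"
  proof (intro ballI allI)
    fix s e assume "s \<in> ext1 S \<phi>"
    then obtain s0 c where "s0 \<in> S" "s = (\<lambda>x. s0 x + c * \<phi> x)"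
      unfolding ext1_def by blast
    then show "(\<lambda>x. e * s x) \<in> ext1 S \<phi>" unfolding ext1_def
      by (auto intro!: exI[of _ "\<lambda>x. e * s0 x"] exI[of _ "e*c"] smS simp: algebra_simps)
  qed
  moreover have "\<exists>p. proj (ext1 S \<phi>) f p" if fT: "f \<in> T" for f
  proof -
    obtain pp where pp: "proj S \<phi> pp" using P[OF phT] by blast
    obtain pf where pf: "proj S f pf" using P[OF fT] by blast
    have ppS: "pp \<in> S" and pfS: "pf \<in> S" using pp pf unfolding proj_def by blast+
    have ppT: "pp \<in> T" and pfT: "pf \<in> T" using ppS pfS ST by blast+
    define \<psi> where "\<psi> = (\<lambda>x. \<phi> x - pp x)"
    have psT: "\<psi> \<in> T" unfolding \<psi>_def using phT ppT by (rule T_diff)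
    have oF: "tint (\<lambda>x. (f x - pf x) * s x) = 0" if "s \<in> S" for s
      using pf that unfolding proj_def by blast
    have oP: "tint (\<lambda>x. \<psi> x * s x) = 0" if "s \<in> S" for s
      using pp that unfolding proj_def \<psi>_def by blast
    show ?thesis
    proof (cases "tint (\<lambda>x. \<psi> x * \<psi> x) = 0")
      case True
      have z: "\<phi> x = pp x" for x using pos_zero[OF psT True, of x] unfolding \<psi>_def by simp
      have "proj (ext1 S \<phi>) f pf"
        unfolding proj_def
      proof (intro conjI ballI)
        show "pf \<in> ext1 S \<phi>" unfolding ext1_def using pfS by (auto intro!: exI[of _ pf] exI[of _ 0])
        fix q assume "q \<in> ext1 S \<phi>"
        then obtain s c where sS: "s \<in> S" and q: "q = (\<lambda>x. s x + c * \<phi> x)" unfolding ext1_def by blast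
        have "q = (\<lambda>x. s x + c * pp x)" using q z by simp
        moreover have "(\<lambda>x. s x + c * pp x) \<in> S" using sS ppS by (intro addS smS)
        ultimately show "tint (\<lambda>x. (f x - pf x) * q x) = 0" using oF by simp
      qed
      then show ?thesis by blast
    next
      case False
      define Y where "Y = tint (\<lambda>x. \<psi> x * \<psi> x)"
      define X where "X = tint (\<lambda>x. (f x - pf x) * \<psi> x)"
      define \<alpha> where "\<alpha> = X / Y"
      define p where "p = (\<lambda>x. (pf x + (- \<alpha>) * pp x) + \<alpha> * \<phi> x)"
      have "proj (ext1 S \<phi>) f p"
        unfolding proj_def
      proof (intro conjI ballI)
        show "p \<in> ext1 S \<phi>" unfolding ext1_def p_def using pfS ppS
          by (auto intro!: exI[of _ "\<lambda>x. pf x + (- \<alpha>) * pp x"] addS smS)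
        fix q assume "q \<in> ext1 S \<phi>"
        then obtain s c where sS: "s \<in> S" and q: "q = (\<lambda>x. s x + c * \<phi> x)" unfolding ext1_def by blast
        define s' where "s' = (\<lambda>x. s x + c * pp x)"
        have s'S: "s' \<in> S" unfolding s'_def using sS ppS by (intro addS smS)
        have s'T: "s' \<in> T" using s'S ST by blast
        have fpT: "(\<lambda>x. f x - pf x) \<in> T" using fT pfT by (rule T_diff)
        have pw: "(f x - p x) * q x = (f x - pf x) * s' x + c * ((f x - pf x) * \<psi> x)
                   + (-\<alpha>) * (\<psi> x * s' x) + (-\<alpha>*c) * (\<psi> x * \<psi> x)" for x
          unfolding p_def q s'_def \<psi>_def by (simp add: algebra_simps)
        have "tint (\<lambda>x. (f x - p x) * q x) = tint (\<lambda>x. (f x - pf x) * s' x) + c * X + (-\<alpha>) * tint (\<lambda>x. \<psi> x * s' x) + (-\<alpha>*c) * Y"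
          unfolding pw X_def Y_def
          by (rule tint_lin4) (use fpT s'T psT in \<open>auto intro!: T.mul\<close>)
        also have "\<dots> = c * X - \<alpha> * c * Y" using oF[OF s'S] oP[OF s'S] by simp
        also have "\<dots> = 0" using False unfolding \<alpha>_def Y_def by simp
        finally show "tint (\<lambda>x. (f x - p x) * q x) = 0" .
      qed
      then show ?thesis by blast
    qed
  qed
  ultimately show ?thesis unfolding good_def by blast
qed




definition V :: "(real^2) set \<Rightarrow> (real^2 \<Rightarrow> real) set" where
  "V L = {f. \<exists>a b :: real^2 \<Rightarrow> real. f = (\<lambda>x. \<Sum>k\<in>L. a k * cos (k \<bullet> x) + b k * sin (k \<bullet> x))}"

lemma XN_V: "XN N = V (lattice_pts N)"
  unfolding XN_def V_def ..

lemma V_empty: "V {} = {\<lambda>x. 0}"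
  unfolding V_def by auto

lemma good_zero: "good {\<lambda>x. 0}"
  unfolding good_def proj_def by (auto intro!: T.cst exI[of _ "\<lambda>x. 0"] simp: tint_def)

lemma V_insert:
  assumes "finite L" "k \<notin> L"
  shows "V (insert k L) = ext1 (ext1 (V L) (\<lambda>x. cos (k \<bullet> x))) (\<lambda>x. sin (k \<bullet> x))"
proof (intro set_eqI iffI)
  fix f assume "f \<in> V (insert k L)"
  then obtain a b where f: "f = (\<lambda>x. \<Sum>k\<in>insert k L. a k * cos (k \<bullet> x) + b k * sin (k \<bullet> x))"
    unfolding V_def by blast
  define s0 where "s0 = (\<lambda>x. \<Sum>k\<in>L. a k * cos (k \<bullet> x) + b k * sin (k \<bullet> x))"
  have "s0 \<in> V L" unfolding V_def s0_def by blast
  then have A: "(\<lambda>x. s0 x + a k * cos (k \<bullet> x)) \<in> ext1 (V L) (\<lambda>x. cos (k \<bullet> x))"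
    unfolding ext1_def by blast
  have "(\<lambda>x. (\<lambda>x. s0 x + a k * cos (k \<bullet> x)) x + b k * sin (k \<bullet> x)) \<in> ext1 (ext1 (V L) (\<lambda>x. cos (k \<bullet> x))) (\<lambda>x. sin (k \<bullet> x))"
    unfolding ext1_def[of "ext1 _ _"] mem_Collect_eq
    apply (rule exI[of _ "\<lambda>x. s0 x + a k * cos (k \<bullet> x)"], rule exI[of _ "b k"])
    using A by simp
  moreover have "f = (\<lambda>x. (\<lambda>x. s0 x + a k * cos (k \<bullet> x)) x + b k * sin (k \<bullet> x))"
    unfolding f s0_def using assms by (simp add: algebra_simps)
  ultimately show "f \<in> ext1 (ext1 (V L) (\<lambda>x. cos (k \<bullet> x))) (\<lambda>x. sin (k \<bullet> x))"
    by simp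
next
  fix f assume "f \<in> ext1 (ext1 (V L) (\<lambda>x. cos (k \<bullet> x))) (\<lambda>x. sin (k \<bullet> x))"
  then obtain s c1 c2 where s: "s \<in> V L" and f: "f = (\<lambda>x. (s x + c1 * cos (k \<bullet> x)) + c2 * sin (k \<bullet> x))"
    unfolding ext1_def by blast
  obtain a b where sd: "s = (\<lambda>x. \<Sum>k\<in>L. a k * cos (k \<bullet> x) + b k * sin (k \<bullet> x))"
    using s unfolding V_def by blast
  have eq: "(\<Sum>j\<in>L. (a(k:=c1)) j * cos (j \<bullet> x) + (b(k:=c2)) j * sin (j \<bullet> x))
          = (\<Sum>j\<in>L. a j * cos (j \<bullet> x) + b j * sin (j \<bullet> x))" for x
    using assms(2) by (intro sum.cong) auto
  have "f = (\<lambda>x. \<Sum>j\<in>insert k L. (a(k:=c1)) j * cos (j \<bullet> x) + (b(k:=c2)) j * sin (j \<bullet> x))"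
    unfolding f sd using assms eq by (simp add: algebra_simps)
  then show "f \<in> V (insert k L)" unfolding V_def by blast
qed

lemma good_V_fin: "finite L \<Longrightarrow> (\<forall>k\<in>L. \<forall>i. k $ i \<in> \<int>) \<Longrightarrow> good (V L)"
proof (induction L rule: finite_induct)
  case empty then show ?case using good_zero V_empty by simp
next
  case (insert k L)
  then have "good (V L)" "\<forall>i. k $ i \<in> \<int>" by auto
  then show ?case unfolding V_insert[OF insert(1,2)]
    by (intro good_ext1 T.cs T.sn) auto
qed

lemma good_V: "(\<forall>k\<in>L. \<forall>i. k $ i \<in> \<int>) \<Longrightarrow> good (V L)"
proof (cases "finite L")
  case False
  then have "V L = {\<lambda>x. 0}" unfolding V_def by auto
  then show ?thesis using good_zero by simp
qed (rule good_V_fin)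

lemma good_XN: "good (XN N)"
  unfolding XN_V by (rule good_V) (auto simp: lattice_pts_def)

lemma proj_unique:
  assumes g: "good S" and "proj S f p" "proj S f p'" and fT: "f \<in> T"
  shows "p = p'"
proof -
  have ST: "S \<subseteq> T" and addS: "\<And>s t. s\<in>S \<Longrightarrow> t\<in>S \<Longrightarrow> (\<lambda>x. s x + t x) \<in> S"
    and smS: "\<And>s c. s\<in>S \<Longrightarrow> (\<lambda>x. c * s x) \<in> S"
    using g unfolding good_def by blast+
  have pS: "p \<in> S" "p' \<in> S" using assms unfolding proj_def by blast+
  define d where "d = (\<lambda>x. p x + (-1) * p' x)"
  have dS: "d \<in> S" unfolding d_def using pS by (intro addS smS)
  have dT: "d \<in> T" using dS ST by blast
  have pT: "p \<in> T" "p' \<in> T" using pS ST by blast+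
  have o1: "tint (\<lambda>x. (f x - p x) * d x) = 0" "tint (\<lambda>x. (f x - p' x) * d x) = 0"
    using assms dS unfolding proj_def by blast+
  have "tint (\<lambda>x. d x * d x) = tint (\<lambda>x. (f x - p' x) * d x - (f x - p x) * d x)"
    by (rule tint_cong) (simp add: d_def algebra_simps)
  also have "\<dots> = 0" using o1 fT pT dT
    by (subst tint_diff) (auto intro!: T_cont T.mul T_diff)
  finally have "d x = 0" for x using pos_zero[OF dT] by blast
  then show ?thesis unfolding d_def by auto
qed

lemma PiN_proj:
  assumes "f \<in> T"
  shows "proj (XN N) f (PiN N f)"
proof -
  have "\<exists>!p. proj (XN N) f p"
    using good_XN[of N] assms proj_unique[OF good_XN] unfolding good_def by metis
  then have "proj (XN N) f (THE p. proj (XN N) f p)" by (rule theI')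
  then show ?thesis unfolding PiN_def proj_def .
qed



lemma G_ineq:
  fixes z1 z2 w1 w2 Msq :: real
  assumes z: "z1^2 + z2^2 \<le> Msq" and w: "w1^2 + w2^2 \<le> Msq"
  shows "(w1^2+w2^2-1)^2/4 - (z1^2+z2^2-1)^2/4
     \<le> (z1^2+z2^2-1) * (z1*(w1-z1) + z2*(w2-z2)) + (3/2*Msq - 1/2) * ((w1-z1)^2 + (w2-z2)^2)"
proof -
  define d1 where "d1 = w1 - z1"
  define d2 where "d2 = w2 - z2"
  define D where "D = d1^2 + d2^2"
  define Z where "Z = z1^2 + z2^2"
  define s where "s = d1*(w1+z1) + d2*(w2+z2)"
  have s2: "s = (w1^2+w2^2) - Z" unfolding s_def d1_def d2_def Z_def by (simp add: algebra_simps power2_eq_square)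
  have D0: "D \<ge> 0" unfolding D_def by simp
  have cs: "s^2 \<le> D * ((w1+z1)^2 + (w2+z2)^2)"
  proof -
    have "D * ((w1+z1)^2 + (w2+z2)^2) - s^2 = (d1*(w2+z2) - d2*(w1+z1))^2"
      unfolding D_def s_def by (simp add: algebra_simps power2_eq_square)
    then show ?thesis by (metis diff_ge_0_iff_ge zero_le_power2)
  qed
  have sq: "(w1+z1)^2 + (w2+z2)^2 \<le> 6*Msq - 2*Z"
  proof -
    have "(w1+z1)^2 + (w2+z2)^2 \<le> 2*(w1^2+w2^2) + 2*Z"
      unfolding Z_def using sum_squares_ge_zero[of "w1-z1" "w2-z2"] by (simp add: algebra_simps power2_eq_square)
    then show ?thesis using z w unfolding Z_def by (smt (verit))
  qed
  have "s^2 \<le> D * (6*Msq - 2*Z)" using cs mult_left_mono[OF sq D0] by linarith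
  then have key: "(Z-1)*D/2 + s^2/4 \<le> (3/2*Msq - 1/2)*D" by (simp add: field_simps)
  have "(w1^2+w2^2-1)^2/4 - (z1^2+z2^2-1)^2/4 = (Z - 1) * (z1*d1 + z2*d2) + (Z-1)*D/2 + s^2/4"
  proof -
    have W: "w1^2+w2^2 = Z + s" using s2 by simp
    have sp: "s = 2*(z1*d1+z2*d2) + D" unfolding s_def D_def d1_def d2_def by (simp add: algebra_simps power2_eq_square)
    have "(w1^2+w2^2-1)^2/4 - (z1^2+z2^2-1)^2/4 = ((Z+s-1)^2 - (Z-1)^2)/4" unfolding W Z_def by simp
    also have "\<dots> = (Z-1)* s/2 + s^2/4" by (simp add: field_simps power2_eq_square)
    also have "\<dots> = (Z - 1) * (z1*d1 + z2*d2) + (Z-1)*D/2 + s^2/4" unfolding sp by (simp add: field_simps)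
    finally show ?thesis .
  qed
  then show ?thesis unfolding d1_def[symmetric] d2_def[symmetric] D_def[symmetric] Z_def[symmetric]
    using key by linarith
qed

lemma amgm:
  fixes x y \<nu> \<tau> :: real assumes "\<nu> > 0" "\<tau> > 0"
  shows "0 \<le> x*x/\<tau> + \<nu>/2 * (y*y) + sqrt (2*\<nu>/\<tau>) * (x*y)"
proof -
  define s where "s = sqrt (2*\<nu>/\<tau>)"
  have ss: "s* s = 2*\<nu>/\<tau>" unfolding s_def using assms by simp
  have "x*x/\<tau> + \<nu>/2 * (y*y) + s * (x*y) = (1/\<tau>) * (x + s*\<tau>/2*y)^2 + (\<nu>/2 - s* s*\<tau>/4)*(y*y)"
    using assms by (simp add: field_simps power2_eq_square)
  also have "\<nu>/2 - s* s*\<tau>/4 = 0" using ss assms by (simp add: field_simps)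
  finally show ?thesis using assms unfolding s_def by simp
qed



lemma norm_grad2: "(norm (grad f x))^2 = (pd 1 f x)^2 + (pd 2 f x)^2"
  unfolding grad_def power2_norm_eq_inner inner_vec_def by (simp add: sum_2 power2_eq_square)

lemma Gpot_grad: "Gpot (grad f x) = ((pd 1 f x)^2 + (pd 2 f x)^2 - 1)^2 / 4"
  unfolding Gpot_def norm_grad2 ..

lemma gnl_comp: "gnl (grad f y) $ i = ((pd 1 f y)^2 + (pd 2 f y)^2 - 1) * pd i f y"
  unfolding gnl_def norm_grad2 by (simp add: grad_def)

lemma T_pd12: "f \<in> T \<Longrightarrow> pd 1 f \<in> T \<and> pd 2 f \<in> T"
  using T_pd by blast

lemma Gpot_T: assumes "f \<in> T" shows "(\<lambda>x. Gpot (grad f x)) \<in> T"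
proof -
  have p: "pd 1 f \<in> T" "pd 2 f \<in> T" using T_pd12[OF assms] by auto
  have "(\<lambda>x. ((pd 1 f x)^2 + (pd 2 f x)^2 - 1)^2 / 4) \<in> T"
    using p by (simp only: divide_inverse mult.commute[of _ "inverse 4"])
      (intro T_cmul T_pow T_diff T.add T.cst)
  then show ?thesis unfolding Gpot_grad .
qed

lemma G_T: assumes "f \<in> T" shows "(\<lambda>y. gnl (grad f y) $ i) \<in> T"
proof -
  have p: "pd 1 f \<in> T" "pd 2 f \<in> T" "pd i f \<in> T" using T_pd assms by blast+
  have "(\<lambda>y. ((pd 1 f y)^2 + (pd 2 f y)^2 - 1) * pd i f y) \<in> T"
    using p by (intro T.mul T_pow T_diff T.add T.cst)
  then show ?thesis unfolding gnl_comp .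
qed

lemma grad_bound: assumes "f \<in> T" shows "norm (grad f x) \<le> grad_Linf f"
proof -
  obtain B1 where B1: "\<forall>x. \<bar>pd 1 f x\<bar> \<le> B1" using T_bdd T_pd12[OF assms] by blast
  obtain B2 where B2: "\<forall>x. \<bar>pd 2 f x\<bar> \<le> B2" using T_bdd T_pd12[OF assms] by blast
  have "norm (grad f y) \<le> B1 + B2" for y
  proof -
    have "norm (grad f y) \<le> (\<Sum>i\<in>UNIV. \<bar>grad f y $ i\<bar>)" by (rule norm_le_l1_cart)
    also have "\<dots> = \<bar>pd 1 f y\<bar> + \<bar>pd 2 f y\<bar>" by (simp add: sum_2 grad_def)
    finally show ?thesis using B1 B2 by (smt (verit))
  qed
  then have "bdd_above (range (\<lambda>x. norm (grad f x)))" by (auto intro!: bdd_aboveI)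
  then show ?thesis unfolding grad_Linf_def by (rule cSUP_upper[rotated]) simp
qed

lemma energy_int: assumes "f \<in> T"
  shows "energy \<nu> f = tint (\<lambda>x. \<nu>/2 * (lap f x)^2 + Gpot (grad f x))"
proof -
  have "(\<lambda>x. (lap f x)^2) \<in> T" using lap_T[OF assms] by (rule T_pow)
  moreover have "(\<lambda>x. Gpot (grad f x)) \<in> T" using assms by (rule Gpot_T)
  ultimately have "tint (\<lambda>x. \<nu>/2 * (lap f x)^2 + Gpot (grad f x)) = tint (\<lambda>x. \<nu>/2 * (lap f x)^2) + tint (\<lambda>x. Gpot (grad f x))"
    by (intro tint_add T_cont T_cmul)
  then show ?thesis unfolding energy_def tint_cmul by simp
qed




theorem lemma2p4:
  fixes \<nu> \<tau> A :: real and N :: nat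
    and h0 :: "real^2 \<Rightarrow> real" and h :: "nat \<Rightarrow> real^2 \<Rightarrow> real"
  assumes "\<nu> > 0" and "\<tau> > 0" and "A > 0" and "N \<ge> 2"
    and "periodic2 h0"
    and "h0 integrable_on torus_box"
    and "(\<lambda>x. (h0 x)^2) integrable_on torus_box"
    and "tint h0 = 0"
    and "h 0 = PiN N h0"
    and "\<And>n. h n \<in> XN N"
    and "\<And>n x. (h (Suc n) x - h n x) / \<tau> =
            - \<nu> * lap (lap (h (Suc n))) x
            + A * lap (\<lambda>y. h (Suc n) y - h n y) x
            + PiN N (dvg (\<lambda>y. gnl (grad (h n) y))) x"
  shows "energy \<nu> (h (Suc n)) - energy \<nu> (h n)
           + (A + 1/2 + sqrt (2 * \<nu> / \<tau>)) * grad_L2sq (\<lambda>x. h (Suc n) x - h n x)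
         \<le> grad_L2sq (\<lambda>x. h (Suc n) x - h n x) * (3/2)
             * max ((grad_Linf (h n))^2) ((grad_Linf (h (Suc n)))^2)"
proof -
  define hn where "hn = h n"
  define hs where "hs = h (Suc n)"
  define d where "d = (\<lambda>y. hs y - hn y)"
  have gX: "good (XN N)" by (rule good_XN)
  have XT: "XN N \<subseteq> T" using gX unfolding good_def by blast
  have hnX: "hn \<in> XN N" and hsX: "hs \<in> XN N" unfolding hn_def hs_def using assms(10) by auto
  have hnT: "hn \<in> T" and hsT: "hs \<in> T" using hnX hsX XT by auto
  have dX: "d \<in> XN N"
  proof -
    have addS: "\<forall>s\<in>XN N. \<forall>t\<in>XN N. (\<lambda>x. s x + t x) \<in> XN N"
      and smS: "\<forall>s\<in>XN N. \<forall>c. (\<lambda>x. c * s x) \<in> XN N" using gX unfolding good_def by blast+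
    have "(\<lambda>x. (-1) * hn x) \<in> XN N" using smS hnX by blast
    then have "(\<lambda>x. hs x + (\<lambda>x. (-1) * hn x) x) \<in> XN N" using addS hsX by (rule_tac bspec[OF bspec[OF addS]])
    then show ?thesis unfolding d_def by simp
  qed
  have dT: "d \<in> T" using dX XT by auto
  have pdT: "pd 1 hn \<in> T" "pd 2 hn \<in> T" "pd 1 hs \<in> T" "pd 2 hs \<in> T" "pd 1 d \<in> T" "pd 2 d \<in> T"
    using T_pd12[OF hnT] T_pd12[OF hsT] T_pd12[OF dT] by auto
  have pd_d: "pd i d x = pd i hs x - pd i hn x" for i x
    unfolding d_def using pd_diff[OF hsT hnT] by simp
  have Ld: "lap d x = lap hs x - lap hn x" for x
  proof -
    have "pd i (pd i d) = pd i (\<lambda>x. pd i hs x - pd i hn x)" for i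
      unfolding d_def using pd_diff[OF hsT hnT] by simp
    then have "pd i (pd i d) x = pd i (pd i hs) x - pd i (pd i hn) x" for i
      using pd_diff[of "pd i hs" "pd i hn" i] T_pd hsT hnT by auto
    then show ?thesis unfolding lap_eq by simp
  qed
  have LT: "lap hs \<in> T" "lap hn \<in> T" "lap d \<in> T" "lap (lap hs) \<in> T"
    using lap_T hsT hnT dT by blast+
  define G1 where "G1 = (\<lambda>y. gnl (grad hn y) $ 1)"
  define G2 where "G2 = (\<lambda>y. gnl (grad hn y) $ 2)"
  have GT: "G1 \<in> T" "G2 \<in> T" unfolding G1_def G2_def using G_T hnT by blast+
  have G1e: "G1 y = ((pd 1 hn y)^2 + (pd 2 hn y)^2 - 1) * pd 1 hn y" for y
    unfolding G1_def gnl_comp ..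
  have G2e: "G2 y = ((pd 1 hn y)^2 + (pd 2 hn y)^2 - 1) * pd 2 hn y" for y
    unfolding G2_def gnl_comp ..
  define Fd where "Fd = dvg (\<lambda>y. gnl (grad hn y))"
  have Fde: "Fd = (\<lambda>x. pd 1 G1 x + pd 2 G2 x)"
    unfolding Fd_def dvg_def G1_def G2_def by (simp add: sum_2)
  have pGT: "pd 1 G1 \<in> T" "pd 2 G2 \<in> T" using T_pd GT by blast+
  have FT: "Fd \<in> T" unfolding Fde using pGT by (rule T.add)
  define P where "P = PiN N Fd"
  have Pp: "proj (XN N) Fd P" unfolding P_def using FT by (rule PiN_proj)
  have PT: "P \<in> T" using Pp XT unfolding proj_def by blast
  have eq: "d x / \<tau> = - \<nu> * lap (lap hs) x + A * lap d x + P x" for x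
    using assms(11)[of n x] unfolding d_def hs_def hn_def P_def Fd_def by simp

  define a where "a = tint (\<lambda>x. d x * d x)"
  define b where "b = tint (\<lambda>x. lap d x * lap d x)"
  define c where "c = grad_L2sq d"
  define Q where "Q = tint (\<lambda>x. lap hs x * lap d x)"
  define R where "R = tint (\<lambda>x. G1 x * pd 1 d x + G2 x * pd 2 d x)"
  define M2 where "M2 = max ((grad_Linf hn)^2) ((grad_Linf hs)^2)"
  define s where "s = sqrt (2 * \<nu> / \<tau>)"

  have c_eq: "c = tint (\<lambda>x. pd 1 d x * pd 1 d x + pd 2 d x * pd 2 d x)"
    unfolding c_def grad_L2sq_def norm_grad2 by (simp only: power2_eq_square)
  have E2: "tint (\<lambda>x. lap d x * d x) = - c"
    unfolding c_eq using green[OF dT dT] .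
  have E1: "(1/\<tau>) * a = - \<nu> * Q + A * (- c) + tint (\<lambda>x. P x * d x)"
  proof -
    have "(1/\<tau>) * a = tint (\<lambda>x. (1/\<tau>) * (d x * d x))" unfolding a_def tint_cmul ..
    also have "\<dots> = tint (\<lambda>x. 0 + (- \<nu>) * (lap (lap hs) x * d x) + A * (lap d x * d x) + 1 * (P x * d x))"
    proof (rule tint_cong)
      fix x
      have "(1/\<tau>) * (d x * d x) = (d x / \<tau>) * d x" by simp
      also have "\<dots> = 0 + (- \<nu>) * (lap (lap hs) x * d x) + A * (lap d x * d x) + 1 * (P x * d x)"
        unfolding eq by (simp add: algebra_simps)
      finally show "(1/\<tau>) * (d x * d x) = 0 + (- \<nu>) * (lap (lap hs) x * d x) + A * (lap d x * d x) + 1 * (P x * d x)" .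
    qed
    also have "\<dots> = tint (\<lambda>x. 0) + (- \<nu>) * tint (\<lambda>x. lap (lap hs) x * d x) + A * tint (\<lambda>x. lap d x * d x) + 1 * tint (\<lambda>x. P x * d x)"
      by (rule tint_lin4) (use LT dT PT in \<open>auto intro!: T.mul T.cst\<close>)
    also have "tint (\<lambda>x. lap (lap hs) x * d x) = Q"
      unfolding Q_def by (rule lap_sym[OF LT(1) dT])
    finally show ?thesis using E2 by (simp add: tint_def)
  qed
  have E3: "tint (\<lambda>x. P x * d x) = tint (\<lambda>x. Fd x * d x)"
  proof -
    have "tint (\<lambda>x. (Fd x - P x) * d x) = 0" using Pp dX unfolding proj_def by blast
    also have "tint (\<lambda>x. (Fd x - P x) * d x) = tint (\<lambda>x. Fd x * d x - P x * d x)"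
      by (rule tint_cong) (simp add: algebra_simps)
    also have "\<dots> = tint (\<lambda>x. Fd x * d x) - tint (\<lambda>x. P x * d x)"
      using FT PT dT by (intro tint_diff T_cont T.mul)
    finally show ?thesis by simp
  qed
  have E4: "tint (\<lambda>x. Fd x * d x) = - R"
  proof -
    have "tint (\<lambda>x. Fd x * d x) = tint (\<lambda>x. pd 1 G1 x * d x + pd 2 G2 x * d x)"
      unfolding Fde by (rule tint_cong) (simp add: algebra_simps)
    also have "\<dots> = tint (\<lambda>x. pd 1 G1 x * d x) + tint (\<lambda>x. pd 2 G2 x * d x)"
      using pGT dT by (intro tint_add T_cont T.mul)
    also have "\<dots> = - tint (\<lambda>x. G1 x * pd 1 d x) - tint (\<lambda>x. G2 x * pd 2 d x)"
      using ibp[OF GT(1) dT, of 1] ibp[OF GT(2) dT, of 2] by simp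
    also have "\<dots> = - R" unfolding R_def
      using GT pdT by (subst tint_add) (auto intro!: T_cont T.mul)
    finally show ?thesis .
  qed
  have bn: "(pd 1 hn x)^2 + (pd 2 hn x)^2 \<le> M2" and bs: "(pd 1 hs x)^2 + (pd 2 hs x)^2 \<le> M2" for x
  proof -
    have "(norm (grad hn x))^2 \<le> (grad_Linf hn)^2"
      by (rule power_mono[OF grad_bound[OF hnT]]) simp
    then show "(pd 1 hn x)^2 + (pd 2 hn x)^2 \<le> M2" unfolding M2_def norm_grad2 by linarith
    have "(norm (grad hs x))^2 \<le> (grad_Linf hs)^2"
      by (rule power_mono[OF grad_bound[OF hsT]]) simp
    then show "(pd 1 hs x)^2 + (pd 2 hs x)^2 \<le> M2" unfolding M2_def norm_grad2 by linarith
  qed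
  define e where "e = (\<lambda>f x. \<nu>/2 * (lap f x)^2 + Gpot (grad f x))"
  have eT: "e f \<in> T" if "f \<in> T" for f
    unfolding e_def using that by (intro T.add T_cmul T_pow lap_T Gpot_T)
  define \<Psi> where "\<Psi> = (\<lambda>x. (G1 x * pd 1 d x + G2 x * pd 2 d x) + \<nu> * (lap hs x * lap d x)
       + (-\<nu>/2) * (lap d x * lap d x) + (3/2*M2 - 1/2) * (pd 1 d x * pd 1 d x + pd 2 d x * pd 2 d x))"
  have pw: "e hs x - e hn x \<le> \<Psi> x" for x
  proof -
    have gi: "((pd 1 hs x)^2+(pd 2 hs x)^2-1)^2/4 - ((pd 1 hn x)^2+(pd 2 hn x)^2-1)^2/4
       \<le> ((pd 1 hn x)^2+(pd 2 hn x)^2-1) * (pd 1 hn x*(pd 1 hs x-pd 1 hn x) + pd 2 hn x*(pd 2 hs x-pd 2 hn x))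
         + (3/2*M2 - 1/2) * ((pd 1 hs x-pd 1 hn x)^2 + (pd 2 hs x-pd 2 hn x)^2)"
      by (rule G_ineq[OF bn bs])
    have lap: "\<nu>/2 * (lap hs x)^2 - \<nu>/2 * (lap hn x)^2 = \<nu> * (lap hs x * lap d x) + (-\<nu>/2) * (lap d x * lap d x)"
      unfolding Ld by (simp add: algebra_simps power2_eq_square)
    show ?thesis unfolding e_def \<Psi>_def Gpot_grad G1e G2e pd_d
      using gi lap by (simp add: algebra_simps power2_eq_square)
  qed
  have ED: "energy \<nu> hs - energy \<nu> hn \<le> R + \<nu> * Q + (-\<nu>/2) * b + (3/2*M2 - 1/2) * c"
  proof -
    have "energy \<nu> hs - energy \<nu> hn = tint (e hs) - tint (e hn)"
      unfolding e_def using energy_int hsT hnT by simp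
    also have "\<dots> = tint (\<lambda>x. e hs x - e hn x)"
      using eT hsT hnT by (intro tint_diff[symmetric] T_cont) auto
    also have "\<dots> \<le> tint \<Psi>"
      unfolding \<Psi>_def
    proof (rule tint_mono[OF _ _ pw[unfolded \<Psi>_def]])
      show "continuous_on UNIV (\<lambda>x. e hs x - e hn x)"
        by (rule T_cont, rule T_diff) (use eT hsT hnT in auto)
      have "(\<lambda>x. (G1 x * pd 1 d x + G2 x * pd 2 d x) + \<nu> * (lap hs x * lap d x)
         + (-\<nu>/2) * (lap d x * lap d x) + (3/2*M2 - 1/2) * (pd 1 d x * pd 1 d x + pd 2 d x * pd 2 d x)) \<in> T"
        using GT pdT LT by (intro T.add T_cmul T.mul)
      then show "continuous_on UNIV (\<lambda>x. (G1 x * pd 1 d x + G2 x * pd 2 d x) + \<nu> * (lap hs x * lap d x)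
         + (-\<nu>/2) * (lap d x * lap d x) + (3/2*M2 - 1/2) * (pd 1 d x * pd 1 d x + pd 2 d x * pd 2 d x))"
        by (rule T_cont)
    qed
    also have "tint \<Psi> = R + \<nu> * Q + (-\<nu>/2) * b + (3/2*M2 - 1/2) * c"
      unfolding \<Psi>_def R_def Q_def b_def c_eq
      by (rule tint_lin4) (use GT pdT LT in \<open>auto intro!: T.mul T.add\<close>)
    finally show ?thesis .
  qed
  have AM: "0 \<le> (1/\<tau>) * a + \<nu>/2 * b + s * (- c)"
  proof -
    have "tint (\<lambda>x. 0) \<le> tint (\<lambda>x. 0 + (1/\<tau>) * (d x * d x) + \<nu>/2 * (lap d x * lap d x) + s * (lap d x * d x))"
    proof (rule tint_mono)
      show "continuous_on UNIV (\<lambda>x. 0 + (1/\<tau>) * (d x * d x) + \<nu>/2 * (lap d x * lap d x) + s * (lap d x * d x))"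
        using dT LT by (intro T_cont T.add T.cst T_cmul T.mul)
      fix x show "0 \<le> 0 + (1/\<tau>) * (d x * d x) + \<nu>/2 * (lap d x * lap d x) + s * (lap d x * d x)"
        using amgm[OF assms(1,2), of "d x" "lap d x"] unfolding s_def by (simp add: mult.commute)
    qed simp
    also have "\<dots> = tint (\<lambda>x. 0) + (1/\<tau>) * a + \<nu>/2 * b + s * tint (\<lambda>x. lap d x * d x)"
      unfolding a_def b_def by (rule tint_lin4) (use dT LT in \<open>auto intro!: T.mul T.cst\<close>)
    finally show ?thesis unfolding E2 by simp
  qed
  have fin: "energy \<nu> hs - energy \<nu> hn + (A + 1/2 + s) * c \<le> c * (3/2) * M2"
  proof -
    have x1: "(A + 1/2 + s) * c = A * c + c/2 + s * c" by (simp add: algebra_simps)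
    have x2: "(3/2*M2 - 1/2) * c = 3/2 * (M2 * c) - c/2" by (simp add: algebra_simps)
    have x3: "c * (3/2) * M2 = 3/2 * (M2 * c)" by simp
    have x4: "A * (- c) = - (A * c)" "s * (-c) = - (s * c)" "(-\<nu>/2) * b = - (\<nu>/2 * b)" by simp_all
    show ?thesis using ED E1 E3 E4 AM unfolding x1 x2 x3 x4 by linarith
  qed
  then show ?thesis unfolding hn_def hs_def d_def c_def M2_def s_def[symmetric] by simp
qed


end
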